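(* Let $\psi,\phi$ be full QBFs and $X$ a finite set of propositional variables. Let $p \in \mathrm{var}(\psi)\setminus \mathrm{free}(\phi)$ be such that no occurrence of $p$ in $\psi$ lies in the scope of a quantifier of $\psi$. Let $Y\subseteq \mathrm{var}(\psi)\setminus \mathrm{var}(\phi)$. Let $X^- = \{x^- : x \in X\}$ and $X^+ = \{x^+ : x \in X\}$ be sets of fresh variables (pairwise distinct and not occurring in $\psi$, $\phi$, $X$, $Y$), and let $\sigma = \{x/x^+ : x \in X\}$. Then $$\exists Y \left(\psi[p/\exists X \phi]\right) \equiv \forall X^-\;\exists (Y \cup X^+ \cup \{p\}) \Big( \psi \land (p \leftrightarrow \phi[\sigma]) \land \bigwedge_{x \in X}\big(\lnot p \rightarrow (x^+ \leftrightarrow x^-)\big) \Big)$$ and $$\exists Y \left(\psi[p/\forall X \phi]\right) \equiv \forall X^-\;\exists (Y \cup X^+ \cup \{p\}) \Big( \psi \land (p \leftrightarrow \phi[\sigma]) \land \bigwedge_{x \in X}\big(p \rightarrow (x^+ \leftrightarrow x^-)\big) \Big).$$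
   Context: Fix a countably infinite set $\mathbb{P}$ of propositional variables and a set of boolean operators, each $k$-ary operator $f^k$ ($k\ge 0$) interpreted by a boolean function $\{0,1\}^k\to\{0,1\}$, containing $\bot,\lnot,\land,\rightarrow,\leftrightarrow$. Full QBFs: the smallest set containing every $p\in\mathbb{P}$, closed under $f^k(\phi_1,\ldots,\phi_k)$ and under $\exists X\phi$, $\forall X\phi$ for finite (possibly empty) $X\subseteq\mathbb{P}$. A valuation $V:\mathbb{P}\to\{0,1\}$ is extended by applying the boolean functions, with $V(\exists X\phi)=1$ iff $V'(\phi)=1$ for some $V'$ agreeing with $V$ on $\mathbb{P}\setminus X$, and $V(\forall X\phi)=1$ iff $V'(\phi)=1$ for all such $V'$. $\phi\equiv\psi$ means $V(\phi)=V(\psi)$ for every valuation $V$. $\mathrm{var}(\phi)$ is the set of variables occurring in $\phi$, $\mathrm{free}(\phi)$ the set of its free variables. $\phi[\sigma]$ for a substitution $\sigma=\{p_1/\phi_1,\ldots,p_k/\phi_k\}$ (distinct $p_i$) simultaneously replaces all free occurrences of each $p_i$ by $\phi_i$. An empty conjunction is $\top$. *)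

theory Defs
  imports Main
begin

text \<open>Full QBFs over the countably infinite set of propositional variables nat.
  A k-ary operator is represented by its interpreting boolean function on the
  list of argument values.\<close>

datatype qbf =
    Var nat
  | Op "bool list \<Rightarrow> bool" "qbf list"
  | Ex "nat set" qbf
  | All "nat set" qbf

text \<open>Full QBFs: all quantified variable sets are finite.\<close>
fun wf :: "qbf \<Rightarrow> bool" where
  "wf (Var p) = True"
| "wf (Op f args) = (\<forall>a\<in>set args. wf a)"
| "wf (Ex X \<phi>) = (finite X \<and> wf \<phi>)"
| "wf (All X \<phi>) = (finite X \<and> wf \<phi>)"

fun eval :: "(nat \<Rightarrow> bool) \<Rightarrow> qbf \<Rightarrow> bool" where
  "eval V (Var p) = V p"
| "eval V (Op f args) = f (map (eval V) args)"
| "eval V (Ex X \<phi>) = (\<exists>V'. (\<forall>q. q \<notin> X \<longrightarrow> V' q = V q) \<and> eval V' \<phi>)"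
| "eval V (All X \<phi>) = (\<forall>V'. (\<forall>q. q \<notin> X \<longrightarrow> V' q = V q) \<longrightarrow> eval V' \<phi>)"

definition qequiv :: "qbf \<Rightarrow> qbf \<Rightarrow> bool" (infix "\<equiv>\<^sub>Q" 50) where
  "\<phi> \<equiv>\<^sub>Q \<psi> \<longleftrightarrow> (\<forall>V. eval V \<phi> = eval V \<psi>)"

fun var :: "qbf \<Rightarrow> nat set" where
  "var (Var p) = {p}"
| "var (Op f args) = (\<Union>a\<in>set args. var a)"
| "var (Ex X \<phi>) = X \<union> var \<phi>"
| "var (All X \<phi>) = X \<union> var \<phi>"

fun free :: "qbf \<Rightarrow> nat set" where
  "free (Var p) = {p}"
| "free (Op f args) = (\<Union>a\<in>set args. free a)"
| "free (Ex X \<phi>) = free \<phi> - X"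
| "free (All X \<phi>) = free \<phi> - X"

text \<open>Simultaneous substitution of free occurrences (no renaming).
  A substitution is a map nat => qbf; variables outside its domain map to Var.\<close>
fun subst :: "qbf \<Rightarrow> (nat \<Rightarrow> qbf) \<Rightarrow> qbf" where
  "subst (Var p) \<sigma> = \<sigma> p"
| "subst (Op f args) \<sigma> = Op f (map (\<lambda>a. subst a \<sigma>) args)"
| "subst (Ex X \<phi>) \<sigma> = Ex X (subst \<phi> (\<lambda>q. if q \<in> X then Var q else \<sigma> q))"
| "subst (All X \<phi>) \<sigma> = All X (subst \<phi> (\<lambda>q. if q \<in> X then Var q else \<sigma> q))"

definition subst1 :: "nat \<Rightarrow> qbf \<Rightarrow> nat \<Rightarrow> qbf" where
  "subst1 p \<chi> = (\<lambda>q. if q = p then \<chi> else Var q)"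

text \<open>No occurrence of p lies in the scope of a quantifier.\<close>
fun unquantified :: "nat \<Rightarrow> qbf \<Rightarrow> bool" where
  "unquantified p (Var q) = True"
| "unquantified p (Op f args) = (\<forall>a\<in>set args. unquantified p a)"
| "unquantified p (Ex X \<phi>) = (p \<notin> var (Ex X \<phi>))"
| "unquantified p (All X \<phi>) = (p \<notin> var (All X \<phi>))"

definition Bot :: qbf where "Bot = Op (\<lambda>_. False) []"
definition Neg :: "qbf \<Rightarrow> qbf" where "Neg a = Op (\<lambda>bs. \<not> bs ! 0) [a]"
definition And :: "qbf \<Rightarrow> qbf \<Rightarrow> qbf" where "And a b = Op (\<lambda>bs. bs ! 0 \<and> bs ! 1) [a, b]"
definition Imp :: "qbf \<Rightarrow> qbf \<Rightarrow> qbf" where "Imp a b = Op (\<lambda>bs. bs ! 0 \<longrightarrow> bs ! 1) [a, b]"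
definition Iff :: "qbf \<Rightarrow> qbf \<Rightarrow> qbf" where "Iff a b = Op (\<lambda>bs. bs ! 0 \<longleftrightarrow> bs ! 1) [a, b]"
definition Top :: qbf where "Top = Neg Bot"

fun Conj :: "qbf list \<Rightarrow> qbf" where
  "Conj [] = Top"
| "Conj [a] = a"
| "Conj (a # as) = And a (Conj as)"

definition BigConj :: "nat set \<Rightarrow> (nat \<Rightarrow> qbf) \<Rightarrow> qbf" where
  "BigConj X F = Conj (map F (sorted_list_of_set X))"

end

theory Submission
  imports Defs
begin


fun bnd :: "qbf \<Rightarrow> nat set" where
  "bnd (Var p) = {}"
| "bnd (Op f args) = (\<Union>a\<in>set args. bnd a)"
| "bnd (Ex X \<phi>) = X \<union> bnd \<phi>"
| "bnd (All X \<phi>) = X \<union> bnd \<phi>"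

lemma bnd_var: "bnd \<phi> \<subseteq> var \<phi>"
  by (induction \<phi>) auto

lemma free_var: "free \<phi> \<subseteq> var \<phi>"
  by (induction \<phi>) auto

lemma coin: "(\<And>q. q \<in> free \<phi> \<Longrightarrow> V q = V' q) \<Longrightarrow> eval V \<phi> = eval V' \<phi>"
proof (induction \<phi> arbitrary: V V')
  case (Var x)
  then show ?case by simp
next
  case (Op f args)
  have "map (eval V) args = map (eval V') args"
    by (rule map_cong) (auto intro!: Op.IH Op.prems)
  then show ?case by (simp only: eval.simps)
next
  case (Ex X \<phi>)
  have *: "eval B (Ex X \<phi>)" if h1: "\<And>q. q \<in> free (Ex X \<phi>) \<Longrightarrow> A q = B q" and h2: "eval A (Ex X \<phi>)" for A B
  proof -
    obtain A1 where A1: "\<forall>q. q \<notin> X \<longrightarrow> A1 q = A q" "eval A1 \<phi>" using h2 by auto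
    let ?B1 = "\<lambda>q. if q \<in> X then A1 q else B q"
    have "eval ?B1 \<phi> = eval A1 \<phi>" by (rule Ex.IH) (use h1 A1 in auto)
    then show ?thesis using A1 by (auto intro!: exI[of _ ?B1])
  qed
  show ?case using *[of V V'] *[of V' V] Ex.prems by metis
next
  case (All X \<phi>)
  have *: "eval B (All X \<phi>)" if h1: "\<And>q. q \<in> free (All X \<phi>) \<Longrightarrow> A q = B q" and h2: "eval A (All X \<phi>)" for A B
  proof -
    { fix B1 assume B1: "\<forall>q. q \<notin> X \<longrightarrow> B1 q = B q"
      let ?A1 = "\<lambda>q. if q \<in> X then B1 q else A q"
      have "eval ?A1 \<phi>" using h2 by auto
      moreover have "eval ?A1 \<phi> = eval B1 \<phi>" by (rule All.IH) (use h1 B1 in auto)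
      ultimately have "eval B1 \<phi>" by simp }
    then show ?thesis by auto
  qed
  show ?case using *[of V V'] *[of V' V] All.prems by metis
qed

lemma subst_id: "(\<And>q. q \<in> free \<phi> \<Longrightarrow> \<sigma> q = Var q) \<Longrightarrow> subst \<phi> \<sigma> = \<phi>"
proof (induction \<phi> arbitrary: \<sigma>)
  case (Op f args)
  then show ?case by (auto intro!: map_idI)
qed auto

lemma subst_eval:
  "(\<And>q. q \<in> free \<phi> \<Longrightarrow> \<sigma> q = Var q \<or> free (\<sigma> q) \<inter> bnd \<phi> = {}) \<Longrightarrow>
   eval V (subst \<phi> \<sigma>) = eval (\<lambda>q. eval V (\<sigma> q)) \<phi>"
proof (induction \<phi> arbitrary: V \<sigma>)
  case (Var x)
  then show ?case by simp
next
  case (Op f args)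
  have "map (\<lambda>a. eval V (subst a \<sigma>)) args = map (eval (\<lambda>q. eval V (\<sigma> q))) args"
  proof (rule map_cong[OF refl])
    fix a assume a: "a \<in> set args"
    show "eval V (subst a \<sigma>) = eval (\<lambda>q. eval V (\<sigma> q)) a"
    proof (rule Op.IH[OF a])
      fix q assume "q \<in> free a"
      then show "\<sigma> q = Var q \<or> free (\<sigma> q) \<inter> bnd a = {}" using Op.prems[of q] a by auto
    qed
  qed
  then show ?case by (simp only: eval.simps subst.simps map_map comp_def)
next
  case (Ex X \<phi>)
  define \<sigma>' where "\<sigma>' = (\<lambda>q. if q \<in> X then Var q else \<sigma> q)"
  have c: "\<sigma>' q = Var q \<or> free (\<sigma>' q) \<inter> bnd \<phi> = {}" if "q \<in> free \<phi>" for q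
    using Ex.prems[of q] that unfolding \<sigma>'_def by auto
  have agr: "eval V' (\<sigma> q) = eval V (\<sigma> q)" if "q \<in> free \<phi>" "q \<notin> X" "\<forall>q. q \<notin> X \<longrightarrow> V' q = V q" for V' q
  proof -
    have "\<sigma> q = Var q \<or> free (\<sigma> q) \<inter> X = {}" using Ex.prems[of q] that by auto
    then show ?thesis
    proof
      assume "\<sigma> q = Var q" then show ?thesis using that by simp
    next
      assume "free (\<sigma> q) \<inter> X = {}" then show ?thesis using that by (auto intro!: coin)
    qed
  qed
  have "eval V (subst (Ex X \<phi>) \<sigma>) = (\<exists>V'. (\<forall>q. q \<notin> X \<longrightarrow> V' q = V q) \<and> eval (\<lambda>q. eval V' (\<sigma>' q)) \<phi>)"
    using Ex.IH[OF c] by (simp add: \<sigma>'_def)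
  also have "\<dots> = eval (\<lambda>q. eval V (\<sigma> q)) (Ex X \<phi>)"
  proof
    assume "\<exists>V'. (\<forall>q. q \<notin> X \<longrightarrow> V' q = V q) \<and> eval (\<lambda>q. eval V' (\<sigma>' q)) \<phi>"
    then obtain V' where V': "\<forall>q. q \<notin> X \<longrightarrow> V' q = V q" "eval (\<lambda>q. eval V' (\<sigma>' q)) \<phi>" by blast
    let ?V = "\<lambda>q. if q \<in> X then V' q else eval V (\<sigma> q)"
    have "eval ?V \<phi> = eval (\<lambda>q. eval V' (\<sigma>' q)) \<phi>"
    proof (rule coin)
      fix q assume q: "q \<in> free \<phi>"
      show "?V q = eval V' (\<sigma>' q)"
        using agr[OF q _ V'(1)]  by (cases "q \<in> X") (simp_all add: \<sigma>'_def)
    qed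
    then show "eval (\<lambda>q. eval V (\<sigma> q)) (Ex X \<phi>)" using V' by (auto intro!: exI[of _ ?V])
  next
    assume "eval (\<lambda>q. eval V (\<sigma> q)) (Ex X \<phi>)"
    then obtain V'' where V'': "\<forall>q. q \<notin> X \<longrightarrow> V'' q = eval V (\<sigma> q)" "eval V'' \<phi>" by auto
    let ?V = "\<lambda>q. if q \<in> X then V'' q else V q"
    have a: "\<forall>q. q \<notin> X \<longrightarrow> ?V q = V q" by simp
    have eq: "eval (\<lambda>q. eval ?V (\<sigma>' q)) \<phi> = eval V'' \<phi>"
    proof (rule coin)
      fix q assume q: "q \<in> free \<phi>"
      show "eval ?V (\<sigma>' q) = V'' q"
        using agr[OF q _ a] V''(1) by (cases "q \<in> X") (simp_all add: \<sigma>'_def)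
    qed
    then show "\<exists>V'. (\<forall>q. q \<notin> X \<longrightarrow> V' q = V q) \<and> eval (\<lambda>q. eval V' (\<sigma>' q)) \<phi>"
    proof (intro exI[of _ ?V] conjI)
      show "\<forall>q. q \<notin> X \<longrightarrow> ?V q = V q" by (rule a)
      show "eval (\<lambda>q. eval ?V (\<sigma>' q)) \<phi>" by (simp only: eq V''(2))
    qed
  qed
  finally show ?case .
next
  case (All X \<phi>)
  define \<sigma>' where "\<sigma>' = (\<lambda>q. if q \<in> X then Var q else \<sigma> q)"
  have c: "\<sigma>' q = Var q \<or> free (\<sigma>' q) \<inter> bnd \<phi> = {}" if "q \<in> free \<phi>" for q
    using All.prems[of q] that unfolding \<sigma>'_def by auto
  have agr: "eval V' (\<sigma> q) = eval V (\<sigma> q)" if "q \<in> free \<phi>" "q \<notin> X" "\<forall>q. q \<notin> X \<longrightarrow> V' q = V q" for V' q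
  proof -
    have "\<sigma> q = Var q \<or> free (\<sigma> q) \<inter> X = {}" using All.prems[of q] that by auto
    then show ?thesis
    proof
      assume "\<sigma> q = Var q" then show ?thesis using that by simp
    next
      assume "free (\<sigma> q) \<inter> X = {}" then show ?thesis using that by (auto intro!: coin)
    qed
  qed
  have "eval V (subst (All X \<phi>) \<sigma>) = (\<forall>V'. (\<forall>q. q \<notin> X \<longrightarrow> V' q = V q) \<longrightarrow> eval (\<lambda>q. eval V' (\<sigma>' q)) \<phi>)"
    using All.IH[OF c] by (simp add: \<sigma>'_def)
  also have "\<dots> = eval (\<lambda>q. eval V (\<sigma> q)) (All X \<phi>)"
  proof
    assume H: "\<forall>V'. (\<forall>q. q \<notin> X \<longrightarrow> V' q = V q) \<longrightarrow> eval (\<lambda>q. eval V' (\<sigma>' q)) \<phi>"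
    show "eval (\<lambda>q. eval V (\<sigma> q)) (All X \<phi>)"
    proof (simp, intro allI impI)
      fix V'' assume V'': "\<forall>q. q \<notin> X \<longrightarrow> V'' q = eval V (\<sigma> q)"
      let ?V = "\<lambda>q. if q \<in> X then V'' q else V q"
      have a: "\<forall>q. q \<notin> X \<longrightarrow> ?V q = V q" by simp
      have "eval (\<lambda>q. eval ?V (\<sigma>' q)) \<phi> = eval V'' \<phi>"
      proof (rule coin)
        fix q assume q: "q \<in> free \<phi>"
        show "eval ?V (\<sigma>' q) = V'' q"
          using agr[OF q _ a] V'' by (cases "q \<in> X") (simp_all add: \<sigma>'_def)
      qed
      then show "eval V'' \<phi>" using H a by auto
    qed
  next
    assume H: "eval (\<lambda>q. eval V (\<sigma> q)) (All X \<phi>)"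
    show "\<forall>V'. (\<forall>q. q \<notin> X \<longrightarrow> V' q = V q) \<longrightarrow> eval (\<lambda>q. eval V' (\<sigma>' q)) \<phi>"
    proof (intro allI impI)
      fix V' assume V': "\<forall>q. q \<notin> X \<longrightarrow> V' q = V q"
      let ?V = "\<lambda>q. if q \<in> X then V' q else eval V (\<sigma> q)"
      have "eval ?V \<phi> = eval (\<lambda>q. eval V' (\<sigma>' q)) \<phi>"
      proof (rule coin)
        fix q assume q: "q \<in> free \<phi>"
        show "?V q = eval V' (\<sigma>' q)"
          using agr[OF q _ V']  by (cases "q \<in> X") (simp_all add: \<sigma>'_def)
      qed
      moreover have "eval ?V \<phi>" using H by simp
      ultimately show "eval (\<lambda>q. eval V' (\<sigma>' q)) \<phi>" by simp
    qed
  qed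
  finally show ?case .
qed

lemma subst1_eval:
  "unquantified p \<psi> \<Longrightarrow> eval V (subst \<psi> (subst1 p \<chi>)) = eval (V(p := eval V \<chi>)) \<psi>"
proof (induction \<psi> arbitrary: V)
  case (Var x)
  then show ?case by (simp add: subst1_def)
next
  case (Op f args)
  have "map (\<lambda>a. eval V (subst a (subst1 p \<chi>))) args = map (eval (V(p := eval V \<chi>))) args"
  proof (rule map_cong[OF refl])
    fix a assume a: "a \<in> set args"
    show "eval V (subst a (subst1 p \<chi>)) = eval (V(p := eval V \<chi>)) a"
      using Op.IH[OF a _, of V] Op.prems a by (simp add: fun_upd_def)
  qed
  then show ?case by (simp only: eval.simps subst.simps map_map comp_def)
next
  case (Ex X \<phi>)
  have "subst \<phi> (\<lambda>q. if q \<in> X then Var q else subst1 p \<chi> q) = \<phi>"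
    by (rule subst_id) (use Ex.prems free_var[of \<phi>] in \<open>auto simp: subst1_def\<close>)
  moreover have "eval V (Ex X \<phi>) = eval (V(p := eval V \<chi>)) (Ex X \<phi>)"
    by (rule coin) (use Ex.prems free_var[of \<phi>] in auto)
  ultimately show ?case by simp
next
  case (All X \<phi>)
  have "subst \<phi> (\<lambda>q. if q \<in> X then Var q else subst1 p \<chi> q) = \<phi>"
    by (rule subst_id) (use All.prems free_var[of \<phi>] in \<open>auto simp: subst1_def\<close>)
  moreover have "eval V (All X \<phi>) = eval (V(p := eval V \<chi>)) (All X \<phi>)"
    by (rule coin) (use All.prems free_var[of \<phi>] in auto)
  ultimately show ?case by simp
qed

lemma eval_Conj: "eval V (Conj as) = (\<forall>a\<in>set as. eval V a)"
  by (induction as rule: Conj.induct) (auto simp: Top_def Neg_def Bot_def And_def)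

lemma eval_BigConj: "finite X \<Longrightarrow> eval V (BigConj X F) = (\<forall>x\<in>X. eval V (F x))"
  by (simp add: BigConj_def eval_Conj)

lemma eval_ops[simp]: "eval V (And a b) = (eval V a \<and> eval V b)" "eval V (Iff a b) = (eval V a = eval V b)"
  "eval V (Imp a b) = (eval V a \<longrightarrow> eval V b)" "eval V (Neg a) = (\<not> eval V a)"
  by (auto simp: Iff_def Imp_def Neg_def And_def)



locale qctx =
  fixes \<psi> \<phi> :: qbf and X Y :: "nat set" and p :: nat
    and xm xp :: "nat \<Rightarrow> nat"
  assumes fin: "finite X"
    and pv: "p \<in> var \<psi> - free \<phi>"
    and uq: "unquantified p \<psi>"
    and Ys: "Y \<subseteq> var \<psi> - var \<phi>"
    and im: "inj_on xm X" and ip: "inj_on xp X" and mp: "xm ` X \<inter> xp ` X = {}"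
    and mf: "xm ` X \<inter> (var \<psi> \<union> var \<phi> \<union> X \<union> Y) = {}"
    and pf: "xp ` X \<inter> (var \<psi> \<union> var \<phi> \<union> X \<union> Y) = {}"
begin

definition ren :: "(nat \<Rightarrow> bool) \<Rightarrow> nat \<Rightarrow> bool" where
  "ren W = (\<lambda>q. if q \<in> X then W (xp q) else W q)"

lemma F1: "eval W (subst \<phi> (\<lambda>q. if q \<in> X then Var (xp q) else Var q)) = eval (ren W) \<phi>"
proof -
  have "eval W (subst \<phi> (\<lambda>q. if q \<in> X then Var (xp q) else Var q))
    = eval (\<lambda>q. eval W ((\<lambda>q. if q \<in> X then Var (xp q) else Var q) q)) \<phi>"
  proof (rule subst_eval)
    fix q assume "q \<in> free \<phi>"
    show "(\<lambda>q. if q \<in> X then Var (xp q) else Var q) q = Var q \<or>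
          free ((\<lambda>q. if q \<in> X then Var (xp q) else Var q) q) \<inter> bnd \<phi> = {}"
      using pf bnd_var[of \<phi>] by auto
  qed
  also have "(\<lambda>q. eval W ((\<lambda>q. if q \<in> X then Var (xp q) else Var q) q)) = ren W"
    by (auto simp: ren_def)
  finally show ?thesis .
qed

lemma F2: assumes "free \<chi> \<inter> Y = {}"
  shows "eval V (Ex Y (subst \<psi> (subst1 p \<chi>))) =
     (\<exists>V1. (\<forall>q. q \<notin> Y \<longrightarrow> V1 q = V q) \<and> eval (V1(p := eval V \<chi>)) \<psi>)"
proof -
  have *: "eval V1 \<chi> = eval V \<chi>" if "\<forall>q. q \<notin> Y \<longrightarrow> V1 q = V q" for V1
  proof (rule coin)
    fix q assume "q \<in> free \<chi>"
    then have "q \<notin> Y" using assms by blast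
    then show "V1 q = V q" using that by blast
  qed
  have "eval V (Ex Y (subst \<psi> (subst1 p \<chi>))) =
     (\<exists>V1. (\<forall>q. q \<notin> Y \<longrightarrow> V1 q = V q) \<and> eval (V1(p := eval V1 \<chi>)) \<psi>)"
    by (simp only: eval.simps subst1_eval[OF uq])
  also have "\<dots> = (\<exists>V1. (\<forall>q. q \<notin> Y \<longrightarrow> V1 q = V q) \<and> eval (V1(p := eval V \<chi>)) \<psi>)"
  proof (intro ex_cong1 conj_cong[OF refl])
    fix V1 assume "\<forall>q. q \<notin> Y \<longrightarrow> V1 q = V q"
    then have "eval V1 \<chi> = eval V \<chi>" by (rule *)
    then show "eval (V1(p := eval V1 \<chi>)) \<psi> = eval (V1(p := eval V \<chi>)) \<psi>" by simp
  qed
  finally show ?thesis .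
qed

lemma free_Ex: "free (Ex X \<phi>) \<inter> Y = {}" and free_All: "free (All X \<phi>) \<inter> Y = {}"
  using free_var[of \<phi>] Ys by auto

lemma F3: "eval V (All (xm ` X) (Ex (Y \<union> xp ` X \<union> {p})
             (Conj [\<psi>, Iff (Var p) (subst \<phi> (\<lambda>q. if q \<in> X then Var (xp q) else Var q)),
                    BigConj X F]))) =
   (\<forall>W. (\<forall>q. q \<notin> xm ` X \<longrightarrow> W q = V q) \<longrightarrow>
      (\<exists>W'. (\<forall>q. q \<notin> Y \<union> xp ` X \<union> {p} \<longrightarrow> W' q = W q) \<and> eval W' \<psi> \<and>
         (W' p = eval (ren W') \<phi>) \<and> (\<forall>x\<in>X. eval W' (F x))))"
  by (simp add: eval_Conj eval_BigConj[OF fin] F1)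

lemma glueB:
  assumes "\<forall>q. q \<notin> Y \<union> xp ` X \<union> {p} \<longrightarrow> W' q = W q"
    "\<forall>q. q \<notin> xm ` X \<longrightarrow> W q = V q" "eval W' \<psi>" "W' p = e"
  shows "\<exists>V1. (\<forall>q. q \<notin> Y \<longrightarrow> V1 q = V q) \<and> eval (V1(p := e)) \<psi>"
proof (intro exI conjI)
  let ?V1 = "\<lambda>q. if q \<in> Y then W' q else V q"
  show "\<forall>q. q \<notin> Y \<longrightarrow> ?V1 q = V q" by simp
  have "eval (?V1(p := e)) \<psi> = eval W' \<psi>"
  proof (rule coin)
    fix q assume "q \<in> free \<psi>"
    then have "q \<in> var \<psi>" using free_var by blast
    then have "q \<notin> xp ` X" "q \<notin> xm ` X" using pf mf by auto
    then show "(?V1(p := e)) q = W' q" using assms by auto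
  qed
  then show "eval (?V1(p := e)) \<psi>" using assms by simp
qed

lemma agree_xm:
  assumes "\<forall>q. q \<notin> Y \<union> xp ` X \<union> {p} \<longrightarrow> W' q = W q" "x \<in> X"
  shows "W' (xm x) = W (xm x)"
proof -
  have "xm x \<notin> Y \<union> xp ` X \<union> {p}" using mf mp pv assms(2) by blast
  then show ?thesis using assms(1) by blast
qed

lemma ballX:
  assumes "\<forall>q. q \<notin> Y \<union> xp ` X \<union> {p} \<longrightarrow> W' q = W q"
  shows "(\<forall>x\<in>X. P \<longrightarrow> W' (xp x) = W' (xm x)) = (\<forall>x\<in>X. P \<longrightarrow> W' (xp x) = W (xm x))"
proof (rule ball_cong[OF refl])
  fix x assume "x \<in> X"
  then have "W' (xm x) = W (xm x)" by (rule agree_xm[OF assms])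
  then show "(P \<longrightarrow> W' (xp x) = W' (xm x)) = (P \<longrightarrow> W' (xp x) = W (xm x))" by simp
qed

lemma glueD:
  assumes "\<forall>q. q \<notin> Y \<union> xp ` X \<union> {p} \<longrightarrow> W' q = W q"
    "\<forall>q. q \<notin> xm ` X \<longrightarrow> W q = V q"
  shows "eval (ren W') \<phi> = eval (\<lambda>q. if q \<in> X then W' (xp q) else V q) \<phi>"
proof (rule coin)
  fix q assume "q \<in> free \<phi>"
  then have "q \<in> var \<phi>" "q \<noteq> p" using free_var pv by auto
  then have "q \<notin> xp ` X" "q \<notin> xm ` X" "q \<notin> Y" using pf mf Ys by auto
  then show "ren W' q = (if q \<in> X then W' (xp q) else V q)" using assms \<open>q \<noteq> p\<close>
    by (auto simp: ren_def)
qed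

lemma glueC:
  fixes g :: "nat \<Rightarrow> bool"
  assumes V1: "\<forall>q. q \<notin> Y \<longrightarrow> V1 q = V q" "eval (V1(p := e)) \<psi>"
    and W: "\<forall>q. q \<notin> xm ` X \<longrightarrow> W q = V q"
  defines "W' \<equiv> (\<lambda>q. if q = p then e else if q \<in> Y then V1 q
                   else if q \<in> xp ` X then g (inv_into X xp q) else W q)"
  shows "\<forall>q. q \<notin> Y \<union> xp ` X \<union> {p} \<longrightarrow> W' q = W q"
    and "eval W' \<psi>" and "W' p = e" and "\<forall>x\<in>X. W' (xp x) = g x"
    and "eval (ren W') \<phi> = eval (\<lambda>q. if q \<in> X then g q else V q) \<phi>"
proof -
  show "\<forall>q. q \<notin> Y \<union> xp ` X \<union> {p} \<longrightarrow> W' q = W q" by (simp add: W'_def)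
  show "W' p = e" by (simp add: W'_def)
  have xpx: "xp x \<noteq> p \<and> xp x \<notin> Y" if "x \<in> X" for x
    using pf pv that by auto
  show g: "\<forall>x\<in>X. W' (xp x) = g x" using xpx ip by (auto simp: W'_def)
  have "eval W' \<psi> = eval (V1(p := e)) \<psi>"
  proof (rule coin)
    fix q assume "q \<in> free \<psi>"
    then have "q \<in> var \<psi>" using free_var by blast
    then have "q \<notin> xp ` X" "q \<notin> xm ` X" using pf mf by auto
    then show "W' q = (V1(p := e)) q" using V1 W by (auto simp: W'_def)
  qed
  then show "eval W' \<psi>" using V1 by simp
  have W'': "\<forall>q. q \<notin> xm ` X \<longrightarrow> W q = V q" by (rule W)
  have "eval (ren W') \<phi> = eval (\<lambda>q. if q \<in> X then W' (xp q) else V q) \<phi>"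
    by (rule glueD[OF _ W'']) (simp add: W'_def)
  also have "(\<lambda>q. if q \<in> X then W' (xp q) else V q) = (\<lambda>q. if q \<in> X then g q else V q)"
    using g by auto
  finally show "eval (ren W') \<phi> = eval (\<lambda>q. if q \<in> X then g q else V q) \<phi>" .
qed

lemma glueC':
  assumes "\<forall>q. q \<notin> Y \<longrightarrow> V1 q = V q" "eval (V1(p := e)) \<psi>"
    and "\<forall>q. q \<notin> xm ` X \<longrightarrow> W q = V q"
  shows "\<exists>W'. (\<forall>q. q \<notin> Y \<union> xp ` X \<union> {p} \<longrightarrow> W' q = W q) \<and> eval W' \<psi> \<and> W' p = e \<and>
     (\<forall>x\<in>X. W' (xp x) = g x) \<and> eval (ren W') \<phi> = eval (\<lambda>q. if q \<in> X then g q else V q) \<phi>"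
  by (rule exI[where x = "\<lambda>q. if q = p then e else if q \<in> Y then V1 q
                   else if q \<in> xp ` X then g (inv_into X xp q) else W q"])
     (intro conjI glueC[OF assms, of g])

lemma mkW: "\<exists>W. (\<forall>q. q \<notin> xm ` X \<longrightarrow> W q = V q) \<and> (\<forall>x\<in>X. W (xm x) = U x)"
proof (intro exI conjI)
  let ?W = "\<lambda>q. if q \<in> xm ` X then U (inv_into X xm q) else V q"
  show "\<forall>q. q \<notin> xm ` X \<longrightarrow> ?W q = V q" by simp
  show "\<forall>x\<in>X. ?W (xm x) = U x"
  proof
    fix x assume x: "x \<in> X"
    show "?W (xm x) = U x" using inv_into_f_f[OF im x] x by simp
  qed
qed

lemma funeq: assumes "\<forall>q. q \<notin> X \<longrightarrow> U q = V q" shows "(\<lambda>q. if q \<in> X then U q else V q) = U"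
proof
  fix q show "(if q \<in> X then U q else V q) = U q" using assms by (cases "q \<in> X") simp_all
qed

abbreviation "\<sigma>0 \<equiv> (\<lambda>q. if q \<in> X then Var (xp q) else Var q)"

lemma part1: "Ex Y (subst \<psi> (subst1 p (Ex X \<phi>))) \<equiv>\<^sub>Q
           All (xm ` X) (Ex (Y \<union> xp ` X \<union> {p})
             (Conj [\<psi>, Iff (Var p) (subst \<phi> \<sigma>0),
                    BigConj X (\<lambda>x. Imp (Neg (Var p)) (Iff (Var (xp x)) (Var (xm x))))]))"
  unfolding qequiv_def
proof
  fix V
  define e where "e = eval V (Ex X \<phi>)"
  have L: "eval V (Ex Y (subst \<psi> (subst1 p (Ex X \<phi>)))) =
     (\<exists>V1. (\<forall>q. q \<notin> Y \<longrightarrow> V1 q = V q) \<and> eval (V1(p := e)) \<psi>)"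
    unfolding e_def by (rule F2[OF free_Ex])
  have R: "eval V (All (xm ` X) (Ex (Y \<union> xp ` X \<union> {p})
             (Conj [\<psi>, Iff (Var p) (subst \<phi> \<sigma>0),
                    BigConj X (\<lambda>x. Imp (Neg (Var p)) (Iff (Var (xp x)) (Var (xm x))))]))) =
   (\<forall>W. (\<forall>q. q \<notin> xm ` X \<longrightarrow> W q = V q) \<longrightarrow>
      (\<exists>W'. (\<forall>q. q \<notin> Y \<union> xp ` X \<union> {p} \<longrightarrow> W' q = W q) \<and> eval W' \<psi> \<and>
         (W' p = eval (ren W') \<phi>) \<and> (\<forall>x\<in>X. \<not> W' p \<longrightarrow> W' (xp x) = W (xm x))))"
    unfolding F3 unfolding eval_ops eval.simps
    by (intro all_cong1 imp_cong[OF refl] ex_cong1 conj_cong[OF refl])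
       (rule ballX, assumption)
  have eU: "e = (\<exists>U. (\<forall>q. q \<notin> X \<longrightarrow> U q = V q) \<and> eval U \<phi>)" by (simp add: e_def)
  show "eval V (Ex Y (subst \<psi> (subst1 p (Ex X \<phi>)))) = eval V (All (xm ` X) (Ex (Y \<union> xp ` X \<union> {p})
             (Conj [\<psi>, Iff (Var p) (subst \<phi> \<sigma>0),
                    BigConj X (\<lambda>x. Imp (Neg (Var p)) (Iff (Var (xp x)) (Var (xm x))))])))"
    unfolding L R
  proof
    assume "\<exists>V1. (\<forall>q. q \<notin> Y \<longrightarrow> V1 q = V q) \<and> eval (V1(p := e)) \<psi>"
    then obtain V1 where V1: "\<forall>q. q \<notin> Y \<longrightarrow> V1 q = V q" "eval (V1(p := e)) \<psi>" by blast
    show "\<forall>W. (\<forall>q. q \<notin> xm ` X \<longrightarrow> W q = V q) \<longrightarrow>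
      (\<exists>W'. (\<forall>q. q \<notin> Y \<union> xp ` X \<union> {p} \<longrightarrow> W' q = W q) \<and> eval W' \<psi> \<and>
         (W' p = eval (ren W') \<phi>) \<and> (\<forall>x\<in>X. \<not> W' p \<longrightarrow> W' (xp x) = W (xm x)))"
    proof (intro allI impI)
      fix W assume W: "\<forall>q. q \<notin> xm ` X \<longrightarrow> W q = V q"
      show "\<exists>W'. (\<forall>q. q \<notin> Y \<union> xp ` X \<union> {p} \<longrightarrow> W' q = W q) \<and> eval W' \<psi> \<and>
         (W' p = eval (ren W') \<phi>) \<and> (\<forall>x\<in>X. \<not> W' p \<longrightarrow> W' (xp x) = W (xm x))"
      proof (cases e)
        case True
        then obtain U where U: "\<forall>q. q \<notin> X \<longrightarrow> U q = V q" "eval U \<phi>" using eU by blast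
        from glueC'[OF V1 W, of U] obtain W' where W':
          "\<forall>q. q \<notin> Y \<union> xp ` X \<union> {p} \<longrightarrow> W' q = W q" "eval W' \<psi>" "W' p = e"
          "eval (ren W') \<phi> = eval (\<lambda>q. if q \<in> X then U q else V q) \<phi>" by blast
        show ?thesis using W' True U funeq[OF U(1)] by (intro exI[of _ W']) auto
      next
        case False
        from glueC'[OF V1 W, of "\<lambda>x. W (xm x)"] obtain W' where W':
          "\<forall>q. q \<notin> Y \<union> xp ` X \<union> {p} \<longrightarrow> W' q = W q" "eval W' \<psi>" "W' p = e"
          "\<forall>x\<in>X. W' (xp x) = W (xm x)"
          "eval (ren W') \<phi> = eval (\<lambda>q. if q \<in> X then W (xm q) else V q) \<phi>" by blast
        have "\<not> eval (\<lambda>q. if q \<in> X then W (xm q) else V q) \<phi>"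
          using False eU by (metis (mono_tags, lifting))
        then show ?thesis using W' False by (intro exI[of _ W']) auto
      qed
    qed
  next
    assume H: "\<forall>W. (\<forall>q. q \<notin> xm ` X \<longrightarrow> W q = V q) \<longrightarrow>
      (\<exists>W'. (\<forall>q. q \<notin> Y \<union> xp ` X \<union> {p} \<longrightarrow> W' q = W q) \<and> eval W' \<psi> \<and>
         (W' p = eval (ren W') \<phi>) \<and> (\<forall>x\<in>X. \<not> W' p \<longrightarrow> W' (xp x) = W (xm x)))"
    show "\<exists>V1. (\<forall>q. q \<notin> Y \<longrightarrow> V1 q = V q) \<and> eval (V1(p := e)) \<psi>"
    proof (cases e)
      case True
      then obtain U where U: "\<forall>q. q \<notin> X \<longrightarrow> U q = V q" "eval U \<phi>" using eU by blast
      obtain W where W: "\<forall>q. q \<notin> xm ` X \<longrightarrow> W q = V q" "\<forall>x\<in>X. W (xm x) = U x"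
        using mkW by blast
      obtain W' where W': "\<forall>q. q \<notin> Y \<union> xp ` X \<union> {p} \<longrightarrow> W' q = W q" "eval W' \<psi>"
         "W' p = eval (ren W') \<phi>" "\<forall>x\<in>X. \<not> W' p \<longrightarrow> W' (xp x) = W (xm x)"
        using H W(1) by blast
      have "W' p"
      proof (rule ccontr)
        assume n: "\<not> W' p"
        have "(\<lambda>q. if q \<in> X then W' (xp q) else V q) = U"
          using W'(4) W(2) n U(1) by auto
        then have "eval (ren W') \<phi>" using glueD[OF W'(1) W(1)] U(2) by simp
        then show False using n W'(3) by simp
      qed
      then show ?thesis using glueB[OF W'(1) W(1) W'(2)] True by simp
    next
      case False
      obtain W' where W': "\<forall>q. q \<notin> Y \<union> xp ` X \<union> {p} \<longrightarrow> W' q = V q" "eval W' \<psi>"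
         "W' p = eval (ren W') \<phi>"
        using H by blast
      have "\<not> eval (\<lambda>q. if q \<in> X then W' (xp q) else V q) \<phi>"
        using False eU by (metis (mono_tags, lifting))
      then have "\<not> W' p" using W'(3) glueD[OF W'(1), of V] by simp
      then show ?thesis using glueB[OF W'(1) _ W'(2), of V e] False by simp
    qed
  qed
qed

lemma part2: "Ex Y (subst \<psi> (subst1 p (All X \<phi>))) \<equiv>\<^sub>Q
           All (xm ` X) (Ex (Y \<union> xp ` X \<union> {p})
             (Conj [\<psi>, Iff (Var p) (subst \<phi> \<sigma>0),
                    BigConj X (\<lambda>x. Imp (Var p) (Iff (Var (xp x)) (Var (xm x))))]))"
  unfolding qequiv_def
proof
  fix V
  define e where "e = eval V (All X \<phi>)"
  have L: "eval V (Ex Y (subst \<psi> (subst1 p (All X \<phi>)))) =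
     (\<exists>V1. (\<forall>q. q \<notin> Y \<longrightarrow> V1 q = V q) \<and> eval (V1(p := e)) \<psi>)"
    unfolding e_def by (rule F2[OF free_All])
  have R: "eval V (All (xm ` X) (Ex (Y \<union> xp ` X \<union> {p})
             (Conj [\<psi>, Iff (Var p) (subst \<phi> \<sigma>0),
                    BigConj X (\<lambda>x. Imp (Var p) (Iff (Var (xp x)) (Var (xm x))))]))) =
   (\<forall>W. (\<forall>q. q \<notin> xm ` X \<longrightarrow> W q = V q) \<longrightarrow>
      (\<exists>W'. (\<forall>q. q \<notin> Y \<union> xp ` X \<union> {p} \<longrightarrow> W' q = W q) \<and> eval W' \<psi> \<and>
         (W' p = eval (ren W') \<phi>) \<and> (\<forall>x\<in>X. W' p \<longrightarrow> W' (xp x) = W (xm x))))"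
    unfolding F3 unfolding eval_ops eval.simps
    by (intro all_cong1 imp_cong[OF refl] ex_cong1 conj_cong[OF refl])
       (rule ballX, assumption)
  have eU: "e = (\<forall>U. (\<forall>q. q \<notin> X \<longrightarrow> U q = V q) \<longrightarrow> eval U \<phi>)" by (simp add: e_def)
  have agV: "\<forall>q. q \<notin> X \<longrightarrow> (\<lambda>q. if q \<in> X then G q else V q) q = V q" for G :: "nat \<Rightarrow> bool"
    by simp
  show "eval V (Ex Y (subst \<psi> (subst1 p (All X \<phi>)))) = eval V (All (xm ` X) (Ex (Y \<union> xp ` X \<union> {p})
             (Conj [\<psi>, Iff (Var p) (subst \<phi> \<sigma>0),
                    BigConj X (\<lambda>x. Imp (Var p) (Iff (Var (xp x)) (Var (xm x))))])))"
    unfolding L R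
  proof
    assume "\<exists>V1. (\<forall>q. q \<notin> Y \<longrightarrow> V1 q = V q) \<and> eval (V1(p := e)) \<psi>"
    then obtain V1 where V1: "\<forall>q. q \<notin> Y \<longrightarrow> V1 q = V q" "eval (V1(p := e)) \<psi>" by blast
    show "\<forall>W. (\<forall>q. q \<notin> xm ` X \<longrightarrow> W q = V q) \<longrightarrow>
      (\<exists>W'. (\<forall>q. q \<notin> Y \<union> xp ` X \<union> {p} \<longrightarrow> W' q = W q) \<and> eval W' \<psi> \<and>
         (W' p = eval (ren W') \<phi>) \<and> (\<forall>x\<in>X. W' p \<longrightarrow> W' (xp x) = W (xm x)))"
    proof (intro allI impI)
      fix W assume W: "\<forall>q. q \<notin> xm ` X \<longrightarrow> W q = V q"
      show "\<exists>W'. (\<forall>q. q \<notin> Y \<union> xp ` X \<union> {p} \<longrightarrow> W' q = W q) \<and> eval W' \<psi> \<and>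
         (W' p = eval (ren W') \<phi>) \<and> (\<forall>x\<in>X. W' p \<longrightarrow> W' (xp x) = W (xm x))"
      proof (cases e)
        case True
        from glueC'[OF V1 W, of "\<lambda>x. W (xm x)"] obtain W' where W':
          "\<forall>q. q \<notin> Y \<union> xp ` X \<union> {p} \<longrightarrow> W' q = W q" "eval W' \<psi>" "W' p = e"
          "\<forall>x\<in>X. W' (xp x) = W (xm x)"
          "eval (ren W') \<phi> = eval (\<lambda>q. if q \<in> X then W (xm q) else V q) \<phi>" by blast
        have all: "\<forall>U. (\<forall>q. q \<notin> X \<longrightarrow> U q = V q) \<longrightarrow> eval U \<phi>" using True unfolding eU .
        have "eval (\<lambda>q. if q \<in> X then W (xm q) else V q) \<phi>"
          by (rule HOL.mp[OF spec[OF all, of "\<lambda>q. if q \<in> X then W (xm q) else V q"] agV])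
        then show ?thesis using W' True by (intro exI[of _ W']) simp
      next
        case False
        then obtain U where U: "\<forall>q. q \<notin> X \<longrightarrow> U q = V q" "\<not> eval U \<phi>" using eU by blast
        from glueC'[OF V1 W, of U] obtain W' where W':
          "\<forall>q. q \<notin> Y \<union> xp ` X \<union> {p} \<longrightarrow> W' q = W q" "eval W' \<psi>" "W' p = e"
          "eval (ren W') \<phi> = eval (\<lambda>q. if q \<in> X then U q else V q) \<phi>" by blast
        have "\<not> eval (ren W') \<phi>" using W'(4) funeq[OF U(1)] U(2) by simp
        then show ?thesis using W' False by (intro exI[of _ W']) simp
      qed
    qed
  next
    assume H: "\<forall>W. (\<forall>q. q \<notin> xm ` X \<longrightarrow> W q = V q) \<longrightarrow>
      (\<exists>W'. (\<forall>q. q \<notin> Y \<union> xp ` X \<union> {p} \<longrightarrow> W' q = W q) \<and> eval W' \<psi> \<and>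
         (W' p = eval (ren W') \<phi>) \<and> (\<forall>x\<in>X. W' p \<longrightarrow> W' (xp x) = W (xm x)))"
    show "\<exists>V1. (\<forall>q. q \<notin> Y \<longrightarrow> V1 q = V q) \<and> eval (V1(p := e)) \<psi>"
    proof (cases e)
      case False
      then obtain U where U: "\<forall>q. q \<notin> X \<longrightarrow> U q = V q" "\<not> eval U \<phi>" using eU by blast
      obtain W where W: "\<forall>q. q \<notin> xm ` X \<longrightarrow> W q = V q" "\<forall>x\<in>X. W (xm x) = U x"
        using mkW by blast
      obtain W' where W': "\<forall>q. q \<notin> Y \<union> xp ` X \<union> {p} \<longrightarrow> W' q = W q" "eval W' \<psi>"
         "W' p = eval (ren W') \<phi>" "\<forall>x\<in>X. W' p \<longrightarrow> W' (xp x) = W (xm x)"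
        using H W(1) by blast
      have "\<not> W' p"
      proof
        assume n: "W' p"
        have "(\<lambda>q. if q \<in> X then W' (xp q) else V q) = U"
        proof
          fix q show "(if q \<in> X then W' (xp q) else V q) = U q"
            using W'(4) W(2) n U(1) by (cases "q \<in> X") simp_all
        qed
        then have "\<not> eval (ren W') \<phi>" using glueD[OF W'(1) W(1)] U(2) by simp
        then show False using n W'(3) by simp
      qed
      then show ?thesis using glueB[OF W'(1) W(1) W'(2)] False by simp
    next
      case True
      obtain W' where W': "\<forall>q. q \<notin> Y \<union> xp ` X \<union> {p} \<longrightarrow> W' q = V q" "eval W' \<psi>"
         "W' p = eval (ren W') \<phi>"
        using H by blast
      have all: "\<forall>U. (\<forall>q. q \<notin> X \<longrightarrow> U q = V q) \<longrightarrow> eval U \<phi>" using True unfolding eU .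
      have "eval (\<lambda>q. if q \<in> X then W' (xp q) else V q) \<phi>"
        by (rule HOL.mp[OF spec[OF all, of "\<lambda>q. if q \<in> X then W' (xp q) else V q"] agV])
      then have "W' p" using W'(3) glueD[OF W'(1), of V] by simp
      then show ?thesis using glueB[OF W'(1) _ W'(2), of V e] True by simp
    qed
  qed
qed

end

theorem lemma1:
  fixes \<psi> \<phi> :: qbf and X Y :: "nat set" and p :: nat
    and xm xp :: "nat \<Rightarrow> nat"
  assumes "wf \<psi>" and "wf \<phi>" and "finite X"
    and "p \<in> var \<psi> - free \<phi>"
    and "unquantified p \<psi>"
    and "Y \<subseteq> var \<psi> - var \<phi>"
    and "inj_on xm X" and "inj_on xp X" and "xm ` X \<inter> xp ` X = {}"
    and "xm ` X \<inter> (var \<psi> \<union> var \<phi> \<union> X \<union> Y) = {}"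
    and "xp ` X \<inter> (var \<psi> \<union> var \<phi> \<union> X \<union> Y) = {}"
  defines "\<sigma> \<equiv> (\<lambda>q. if q \<in> X then Var (xp q) else Var q)"
  shows "(Ex Y (subst \<psi> (subst1 p (Ex X \<phi>))) \<equiv>\<^sub>Q
           All (xm ` X) (Ex (Y \<union> xp ` X \<union> {p})
             (Conj [\<psi>, Iff (Var p) (subst \<phi> \<sigma>),
                    BigConj X (\<lambda>x. Imp (Neg (Var p)) (Iff (Var (xp x)) (Var (xm x))))]))) \<and>
         (Ex Y (subst \<psi> (subst1 p (All X \<phi>))) \<equiv>\<^sub>Q
           All (xm ` X) (Ex (Y \<union> xp ` X \<union> {p})
             (Conj [\<psi>, Iff (Var p) (subst \<phi> \<sigma>),
                    BigConj X (\<lambda>x. Imp (Var p) (Iff (Var (xp x)) (Var (xm x))))])))"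
  proof -
  interpret L: qctx \<psi> \<phi> X Y p xm xp
    by (rule qctx.intro[OF assms(3-11)])
  show ?thesis using L.part1 L.part2 unfolding assms(12) by blast
qed

end
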